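(* Let $p$ be a prime and $n=p^{d_1}+\cdots+p^{d_k}$ with integers $0\le d_1<\cdots<d_k$ and $k>1$. Let \[ P:=\Bigl\{\overline{U}: \emptyset\ne U\subsetneq\{p^{d_1},\ldots,p^{d_k}\}\Bigr\}, \] where $\overline U$ is the sum of the elements of $U$, partially ordered by $\overline U\preccurlyeq\overline V$ iff $U\subseteq V$. For $T\subseteq P$ (viewed as a subposet), let $\chi(T)$ be the number of chains in $T$ of even cardinality minus the number of chains in $T$ of odd cardinality (the empty chain counts as a chain of cardinality $0$). Then \[ c_{p,i}(n)=\begin{cases} 2^{n-2^k+1}\,|\{T\subseteq P:\chi(T)\equiv i\pmod p\}| & \text{if } p=2 \text{ or } i=0,\\ 2^{n-2^k}\,|\{T\subseteq P:\chi(T)\equiv i \text{ or } \chi(T)\equiv -i\pmod p\}| & \text{if } p>2 \text{ and } i\in\{1,\ldots,p-1\}.\end{cases} \]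
   Context: For a permutation $w$ of $[n]$, $D(w)=\{i\in[n-1]: w(i)>w(i+1)\}$. A composition $\alpha=(\alpha_1,\ldots,\alpha_\ell)$ of $n$ (written $\alpha\models n$) is a sequence of positive integers with sum $n$, with descent set $D(\alpha)=\{\alpha_1,\alpha_1+\alpha_2,\ldots,\alpha_1+\cdots+\alpha_{\ell-1}\}$. The ribbon number is $r_\alpha=|\{w\in\mathfrak{S}_n: D(w)=D(\alpha)\}|$, and for $i\in\mathbb{Z}_p$, $c_{p,i}(n)=|\{\alpha\models n: r_\alpha\equiv i\pmod p\}|$. A chain in a poset is a subset whose elements are pairwise comparable. *)

theory Defs
  imports "HOL-Combinatorics.Permutations" "HOL-Number_Theory.Cong"
begin

definition perm_descents :: "nat \<Rightarrow> (nat \<Rightarrow> nat) \<Rightarrow> nat set" where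
  "perm_descents n w = {i \<in> {1..<n}. w i > w (Suc i)}"

definition compositions :: "nat \<Rightarrow> nat list set" where
  "compositions n = {\<alpha>. (\<forall>a\<in>set \<alpha>. 0 < a) \<and> sum_list \<alpha> = n}"

definition comp_descents :: "nat list \<Rightarrow> nat set" where
  "comp_descents \<alpha> = {sum_list (take j \<alpha>) | j. 1 \<le> j \<and> j < length \<alpha>}"

definition ribbon :: "nat list \<Rightarrow> nat" where
  "ribbon \<alpha> = card {w. w permutes {1..sum_list \<alpha>} \<and>
      perm_descents (sum_list \<alpha>) w = comp_descents \<alpha>}"

definition c_count :: "nat \<Rightarrow> nat \<Rightarrow> nat \<Rightarrow> nat" where
  "c_count p i n = card {\<alpha> \<in> compositions n. [ribbon \<alpha> = i] (mod p)}"

definition Pset :: "nat set \<Rightarrow> nat set" where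
  "Pset S = {\<Sum>U | U. U \<noteq> {} \<and> U \<subset> S}"

definition Ple :: "nat set \<Rightarrow> nat \<Rightarrow> nat \<Rightarrow> bool" where
  "Ple S x y \<longleftrightarrow> (\<exists>U V. U \<noteq> {} \<and> U \<subset> S \<and> V \<noteq> {} \<and> V \<subset> S \<and>
      x = \<Sum>U \<and> y = \<Sum>V \<and> U \<subseteq> V)"

definition is_chain_in :: "nat set \<Rightarrow> nat set \<Rightarrow> nat set \<Rightarrow> bool" where
  "is_chain_in S T C \<longleftrightarrow> C \<subseteq> T \<and> (\<forall>x\<in>C. \<forall>y\<in>C. Ple S x y \<or> Ple S y x)"

definition chi :: "nat set \<Rightarrow> nat set \<Rightarrow> int" where
  "chi S T = (\<Sum>C \<in> {C. is_chain_in S T C}. (-1) ^ card C)"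

end

theory Submission
  imports Defs
begin


definition pw :: "nat \<Rightarrow> nat set \<Rightarrow> bool" where
  "pw p U \<longleftrightarrow> finite U \<and> (\<forall>x\<in>U. \<exists>d. x = p ^ d)"

lemma pw_subset: "pw p U \<Longrightarrow> V \<subseteq> U \<Longrightarrow> pw p V"
  unfolding pw_def by (auto intro: finite_subset)

lemma pw_pos: "pw p U \<Longrightarrow> p > 0 \<Longrightarrow> x \<in> U \<Longrightarrow> x > 0"
  unfolding pw_def by auto

lemma pw_sum_less:
  assumes "p \<ge> 2" "pw p U" "\<forall>x\<in>U. x < p ^ e"
  shows "\<Sum>U < p ^ e"
  using assms(2,3)
proof (induction e arbitrary: U)
  case 0
  have "U = {}"
  proof (rule ccontr)
    assume "U \<noteq> {}"
    then obtain x where x: "x \<in> U" by blast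
    then obtain d where "x = p ^ d" using 0 unfolding pw_def by auto
    then have "x \<ge> 1" using assms(1) by simp
    then show False using 0 x by auto
  qed
  then show ?case by simp
next
  case (Suc e)
  define U' where "U' = U - {p ^ e}"
  have pwU': "pw p U'" using Suc.prems pw_subset U'_def by blast
  have "\<forall>x\<in>U'. x < p ^ e"
  proof
    fix x assume x: "x \<in> U'"
    then obtain d where d: "x = p ^ d" using Suc.prems unfolding pw_def U'_def by auto
    have "d < Suc e" using Suc.prems x d assms(1) unfolding U'_def
      by (metis DiffD1 power_strict_increasing_iff Suc_1 Suc_le_lessD)
    moreover have "d \<noteq> e" using x d U'_def by auto
    ultimately have "d < e" by simp
    then show "x < p ^ e" using d assms(1) by (simp add: power_strict_increasing)
  qed
  then have IH: "\<Sum>U' < p ^ e" using Suc.IH pwU' by blast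
  have fin: "finite U" using Suc.prems pw_def by auto
  have "\<Sum>U \<le> p ^ e + \<Sum>U'"
  proof (cases "p ^ e \<in> U")
    case True
    then show ?thesis using fin U'_def by (simp add: sum.remove)
  next
    case False
    then show ?thesis using U'_def by simp
  qed
  also have "\<dots> < 2 * p ^ e" using IH by simp
  also have "\<dots> \<le> p ^ Suc e" using assms(1) by simp
  finally show ?case .
qed

lemma pw_sum_inj:
  assumes "p \<ge> 2" "pw p U" "pw p V" "\<Sum>U = \<Sum>V"
  shows "U = V"
  using assms(2-)
proof (induction "card U" arbitrary: U V rule: less_induct)
  case less
  have finU: "finite U" and finV: "finite V" using less.prems pw_def by auto
  have z: "W = {}" if "pw p W" "\<Sum>W = 0" for W
    using that pw_pos[of p W] assms(1) finite_subset unfolding pw_def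
    by (metis all_not_in_conv not_gr0 sum_eq_0_iff zero_less_numeral order.strict_trans2)
  show ?case
  proof (cases "U = {} \<or> V = {}")
    case True
    then show ?thesis using z less.prems by (metis sum.empty)
  next
    case False
    define m where "m = Max U"
    define m' where "m' = Max V"
    have mU: "m \<in> U" using False finU m_def by simp
    have mV: "m' \<in> V" using False finV m'_def by simp
    have key: "\<Sum>A < y" if a: "pw p A" "finite A" "A \<noteq> {}" "y \<in> B" "pw p B" "Max A < y" for A B y
    proof -
      obtain e where e: "y = p ^ e" using a(4,5) unfolding pw_def by blast
      have "\<forall>x\<in>A. x < p ^ e" using a e by (metis Max_ge le_less_trans)
      then show ?thesis using pw_sum_less[OF assms(1) a(1)] e by simp
    qed
    have le: "y \<le> \<Sum>B" if "finite B" "y \<in> B" for B and y :: nat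
      using that by (simp add: sum.remove)
    have "m = m'"
    proof (rule ccontr)
      assume "m \<noteq> m'"
      then consider "m < m'" | "m' < m" by linarith
      then show False
      proof cases
        case 1
        then have "\<Sum>U < m'" using key[of U m' V] less.prems finU False m_def mV by auto
        then show False using le[OF finV mV] less.prems by simp
      next
        case 2
        then have "\<Sum>V < m" using key[of V m U] less.prems finV False m'_def mU by auto
        then show False using le[OF finU mU] less.prems by simp
      qed
    qed
    have "\<Sum>(U - {m}) = \<Sum>(V - {m})"
      using less.prems(3) mU mV \<open>m = m'\<close> finU finV by (simp add: sum_diff1_nat)
    moreover have "card (U - {m}) < card U" using mU finU by (meson card_Diff1_less)
    ultimately have "U - {m} = V - {m}"
      using less.hyps less.prems pw_subset by (metis Diff_subset)
    then show ?thesis using mU mV \<open>m = m'\<close> by (metis insert_Diff)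
  qed
qed


lemma prime_dvd_choose_pow:
  assumes "prime p" "0 < k" "k < p ^ d"
  shows "p dvd (p ^ d choose k)"
proof (rule ccontr)
  assume nd: "\<not> p dvd (p ^ d choose k)"
  have "coprime p (p ^ d choose k)" using assms(1) nd by (simp add: prime_imp_coprime)
  then have cp: "coprime (p ^ d) (p ^ d choose k)" by simp
  have "k * (p ^ d choose k) = p ^ d * ((p ^ d - 1) choose (k - 1))"
    using assms(2) by (rule times_binomial_minus1_eq)
  then have "p ^ d dvd k * (p ^ d choose k)" by simp
  then have "p ^ d dvd k" using cp coprime_dvd_mult_left_iff by blast
  then have "p ^ d \<le> k" using assms(2) by (simp add: dvd_imp_le)
  then show False using assms(3) by simp
qed

lemma choose_add_pow:
  assumes "prime p" "a < p ^ d"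
  shows "[(a + p ^ d) choose b = (a choose b) + (if p ^ d \<le> b then a choose (b - p ^ d) else 0)] (mod p)"
proof -
  define g where "g k = (p ^ d choose k) * (a choose (b - k))" for k
  have v: "(a + p ^ d) choose b = (\<Sum>k\<le>b. g k)"
    unfolding g_def using vandermonde[of "p ^ d" a b] by (simp add: add.commute)
  have pd0: "p ^ d \<noteq> 0" using assms(1) by (simp add: prime_gt_0_nat)
  have split: "(\<Sum>k\<le>b. g k) = (\<Sum>k\<in>{..b} \<inter> {0, p ^ d}. g k) + (\<Sum>k\<in>{..b} - {0, p ^ d}. g k)"
  proof -
    have "{..b} = ({..b} \<inter> {0, p ^ d}) \<union> ({..b} - {0, p ^ d})" by auto
    then show ?thesis by (metis finite_atMost finite_Diff finite_Int sum.union_disjoint Diff_disjoint Int_Diff_disjoint)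
  qed
  have first: "(\<Sum>k\<in>{..b} \<inter> {0, p ^ d}. g k) = (a choose b) + (if p ^ d \<le> b then a choose (b - p ^ d) else 0)"
  proof (cases "p ^ d \<le> b")
    case True
    then have "{..b} \<inter> {0, p ^ d} = {0, p ^ d}" by auto
    then show ?thesis using True pd0 by (simp add: g_def)
  next
    case False
    then have "{..b} \<inter> {0, p ^ d} = {0}" by auto
    then show ?thesis using False by (simp add: g_def)
  qed
  have "p dvd g k" if "k \<in> {..b} - {0, p ^ d}" for k
  proof (cases "k < p ^ d")
    case True
    then show ?thesis using that prime_dvd_choose_pow[OF assms(1), of k d] by (simp add: g_def)
  next
    case False
    then have "k > p ^ d" using that by auto
    then show ?thesis by (simp add: g_def binomial_eq_0)
  qed
  then have "p dvd (\<Sum>k\<in>{..b} - {0, p ^ d}. g k)" by (rule dvd_sum)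
  then have c0: "[(\<Sum>k\<in>{..b} - {0, p ^ d}. g k) = 0] (mod p)" by (simp add: cong_0_iff)
  show ?thesis unfolding v split first using cong_add[OF cong_refl c0] by simp
qed

lemma binom_pw:
  assumes "prime p" "pw p U"
  shows "[\<Sum>U choose b = (if \<exists>V\<subseteq>U. b = \<Sum>V then 1 else 0)] (mod p)"
  using assms(2)
proof (induction "card U" arbitrary: U b rule: less_induct)
  case less
  have p2: "p \<ge> 2" using assms(1) by (simp add: prime_ge_2_nat)
  have finU: "finite U" using less.prems pw_def by auto
  show ?case
  proof (cases "U = {}")
    case True
    then show ?thesis by (cases b) auto
  next
    case False
    define m where "m = Max U"
    have mU: "m \<in> U" using False finU m_def by simp
    obtain e where e: "m = p ^ e" using mU less.prems pw_def by auto
    define U' where "U' = U - {m}"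
    have pwU': "pw p U'" using less.prems pw_subset U'_def by blast
    have lt: "\<forall>x\<in>U'. x < p ^ e"
    proof
      fix x assume x: "x \<in> U'"
      then have "x \<le> m" using U'_def m_def finU by simp
      moreover have "x \<noteq> m" using x U'_def by simp
      ultimately show "x < p ^ e" using e by simp
    qed
    have aless: "\<Sum>U' < p ^ e" using pw_sum_less[OF p2 pwU' lt] .
    have sumU: "\<Sum>U = \<Sum>U' + p ^ e" using mU finU e U'_def by (simp add: sum.remove)
    have cardU': "card U' < card U" using mU finU U'_def by (meson card_Diff1_less)
    have IH: "[\<Sum>U' choose c = (if \<exists>V\<subseteq>U'. c = \<Sum>V then 1 else 0)] (mod p)" for c
      using less.hyps[OF cardU' pwU'] .
    have sumle: "\<Sum>V \<le> \<Sum>U'" if "V \<subseteq> U'" for V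
      using that finU U'_def by (intro sum_mono2) auto
    note ca = choose_add_pow[OF assms(1) aless, of b]
    show ?thesis
    proof (cases "p ^ e \<le> b")
      case False
      have eq: "(\<exists>V\<subseteq>U. b = \<Sum>V) \<longleftrightarrow> (\<exists>V\<subseteq>U'. b = \<Sum>V)"
      proof
        assume "\<exists>V\<subseteq>U. b = \<Sum>V"
        then obtain V where V: "V \<subseteq> U" "b = \<Sum>V" by blast
        have "m \<notin> V"
        proof
          assume "m \<in> V"
          moreover have "finite V" using V finU finite_subset by blast
          ultimately have "m \<le> \<Sum>V" by (simp add: sum.remove)
          then show False using V False e by simp
        qed
        then show "\<exists>V\<subseteq>U'. b = \<Sum>V" using V U'_def by blast
      next
        assume "\<exists>V\<subseteq>U'. b = \<Sum>V"
        then show "\<exists>V\<subseteq>U. b = \<Sum>V" using U'_def by blast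
      qed
      have "[\<Sum>U choose b = \<Sum>U' choose b] (mod p)" using ca False sumU by simp
      from cong_trans[OF this IH[of b]] show ?thesis by (simp only: eq)
    next
      case True
      have "\<Sum>U' choose b = 0" using True aless by simp
      have eq: "(\<exists>V\<subseteq>U. b = \<Sum>V) \<longleftrightarrow> (\<exists>V\<subseteq>U'. b - p ^ e = \<Sum>V)"
      proof
        assume "\<exists>V\<subseteq>U. b = \<Sum>V"
        then obtain V where V: "V \<subseteq> U" "b = \<Sum>V" by blast
        have "m \<in> V"
        proof (rule ccontr)
          assume "m \<notin> V"
          then have "V \<subseteq> U'" using V U'_def by blast
          then show False using sumle[OF \<open>V \<subseteq> U'\<close>] aless True V(2) by linarith
        qed
        then have "b - p ^ e = \<Sum>(V - {m})" using V finU e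
          by (simp add: finite_subset sum.remove)
        moreover have "V - {m} \<subseteq> U'" using V U'_def by blast
        ultimately show "\<exists>V\<subseteq>U'. b - p ^ e = \<Sum>V" by blast
      next
        assume "\<exists>V\<subseteq>U'. b - p ^ e = \<Sum>V"
        then obtain V where V: "V \<subseteq> U'" "b - p ^ e = \<Sum>V" by blast
        have "m \<notin> V" using V U'_def by blast
        then have "\<Sum>(insert m V) = m + \<Sum>V" using V finU U'_def
          by (simp add: finite_subset)
        then have "b = \<Sum>(insert m V)" using V True e by simp
        moreover have "insert m V \<subseteq> U" using V U'_def mU by blast
        ultimately show "\<exists>V\<subseteq>U. b = \<Sum>V" by blast
      qed
      have "[\<Sum>U choose b = \<Sum>U' choose (b - p ^ e)] (mod p)"
        using ca True sumU \<open>\<Sum>U' choose b = 0\<close> by simp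
      from cong_trans[OF this IH[of "b - p ^ e"]] show ?thesis by (simp only: eq)
    qed
  qed
qed


definition ldesc :: "nat list \<Rightarrow> nat set" where
  "ldesc xs = {i. 1 \<le> i \<and> i < length xs \<and> xs ! (i - 1) > xs ! i}"

definition Lset :: "nat set \<Rightarrow> nat set \<Rightarrow> nat list set" where
  "Lset A S = {xs. distinct xs \<and> set xs = A \<and> ldesc xs \<subseteq> S}"

lemma finite_Lset: "finite A \<Longrightarrow> finite (Lset A S)"
  by (rule finite_subset[OF _ finite_subset_distinct[of A]]) (auto simp: Lset_def)

lemma ldesc_drop: "(\<forall>i\<in>ldesc xs. i \<le> s) \<longleftrightarrow> sorted (drop s xs)"
proof -
  have "(\<forall>i\<in>ldesc xs. i \<le> s) \<longleftrightarrow> (\<forall>j. Suc j < length xs - s \<longrightarrow> xs ! (s + j) \<le> xs ! Suc (s + j))"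
  proof
    assume a: "\<forall>i\<in>ldesc xs. i \<le> s"
    show "\<forall>j. Suc j < length xs - s \<longrightarrow> xs ! (s + j) \<le> xs ! Suc (s + j)"
    proof (intro allI impI)
      fix j assume j: "Suc j < length xs - s"
      have "Suc (s + j) \<notin> ldesc xs" using a by auto
      then show "xs ! (s + j) \<le> xs ! Suc (s + j)" using j by (auto simp: ldesc_def)
    qed
  next
    assume a: "\<forall>j. Suc j < length xs - s \<longrightarrow> xs ! (s + j) \<le> xs ! Suc (s + j)"
    show "\<forall>i\<in>ldesc xs. i \<le> s"
    proof
      fix i assume i: "i \<in> ldesc xs"
      show "i \<le> s"
      proof (rule ccontr)
        assume "\<not> i \<le> s"
        then obtain j where ij: "i = Suc (s + j)" by (metis add_Suc_right less_imp_Suc_add not_le)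
        then have "Suc j < length xs - s" using i by (auto simp: ldesc_def)
        then have "xs ! (s + j) \<le> xs ! Suc (s + j)" using a by blast
        then show False using i ij by (auto simp: ldesc_def)
      qed
    qed
  qed
  also have "\<dots> \<longleftrightarrow> sorted (drop s xs)"
    unfolding sorted_iff_nth_Suc by auto
  finally show ?thesis .
qed

lemma ldesc_empty_iff: "ldesc xs = {} \<longleftrightarrow> sorted xs"
  using ldesc_drop[of xs 0] by (auto simp: ldesc_def)

lemma ldesc_take: "ldesc (take s xs) = ldesc xs \<inter> {..<s}"
  by (auto simp: ldesc_def)

lemma ldesc_append_sorted:
  assumes "sorted ys"
  shows "ldesc (xs @ ys) \<subseteq> ldesc xs \<union> {length xs}"
proof
  fix i assume i: "i \<in> ldesc (xs @ ys)"
  have "\<forall>i\<in>ldesc (xs @ ys). i \<le> length xs" using assms ldesc_drop[of "xs @ ys" "length xs"] by simp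
  then have "i \<le> length xs" using i by blast
  moreover have "i \<in> ldesc xs" if "i < length xs"
  proof -
    have "i \<in> ldesc (take (length xs) (xs @ ys))" using i that ldesc_take[of "length xs" "xs @ ys"] by blast
    then show ?thesis by simp
  qed
  ultimately show "i \<in> ldesc xs \<union> {length xs}" by fastforce
qed

lemma Lset_empty:
  assumes "finite A"
  shows "Lset A {} = {sorted_list_of_set A}"
proof -
  have "xs = sorted_list_of_set A" if "distinct xs" "set xs = A" "sorted xs" for xs
    using that assms by (metis sorted_distinct_set_unique sorted_sorted_list_of_set distinct_sorted_list_of_set set_sorted_list_of_set)
  then show ?thesis using assms by (auto simp: Lset_def ldesc_empty_iff)
qed

lemma Lset_rec:
  assumes fin: "finite A" and S: "S \<subseteq> {1..<card A}" and ne: "S \<noteq> {}" and s: "s = Max S"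
  shows "Lset A S = (\<lambda>xs. xs @ sorted_list_of_set (A - set xs)) `
            (\<Union>Y\<in>{Y. Y \<subseteq> A \<and> card Y = s}. Lset Y (S - {s}))"
proof
  have sS: "s \<in> S" using s ne S finite_subset by (metis Max_in finite_atLeastLessThan)
  have sle: "\<forall>i\<in>S. i \<le> s" using s S by (metis Max_ge finite_atLeastLessThan finite_subset)
  have slt: "s < card A" using sS S by auto
  show "Lset A S \<subseteq> (\<lambda>xs. xs @ sorted_list_of_set (A - set xs)) `
            (\<Union>Y\<in>{Y. Y \<subseteq> A \<and> card Y = s}. Lset Y (S - {s}))"
  proof
    fix xs assume xs: "xs \<in> Lset A S"
    then have d: "distinct xs" and st: "set xs = A" and ld: "ldesc xs \<subseteq> S" by (auto simp: Lset_def)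
    have len: "length xs = card A" using d st distinct_card by fastforce
    define xs1 where "xs1 = take s xs"
    define ys where "ys = drop s xs"
    have app: "xs = xs1 @ ys" by (simp add: xs1_def ys_def)
    have d1: "distinct xs1" and dy: "distinct ys" and disj: "set xs1 \<inter> set ys = {}"
      using d app by (metis distinct_append)+
    have l1: "length xs1 = s" using len slt by (simp add: xs1_def)
    have c1: "card (set xs1) = s" using d1 l1 distinct_card by blast
    have sub1: "set xs1 \<subseteq> A" using st app by auto
    have ld1: "ldesc xs1 \<subseteq> S - {s}" using ld ldesc_take[of s xs] by (auto simp: xs1_def)
    have sy: "sorted ys" using ldesc_drop[of xs s] ld sle ys_def by blast
    have sety: "set ys = A - set xs1" using st app disj by auto
    have "ys = sorted_list_of_set (A - set xs1)"
      using sy dy sety fin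
      by (metis finite_Diff sorted_distinct_set_unique sorted_sorted_list_of_set distinct_sorted_list_of_set set_sorted_list_of_set)
    then have "xs = xs1 @ sorted_list_of_set (A - set xs1)" using app by simp
    moreover have "xs1 \<in> (\<Union>Y\<in>{Y. Y \<subseteq> A \<and> card Y = s}. Lset Y (S - {s}))"
      using d1 c1 sub1 ld1 by (auto simp: Lset_def)
    ultimately show "xs \<in> (\<lambda>xs. xs @ sorted_list_of_set (A - set xs)) `
            (\<Union>Y\<in>{Y. Y \<subseteq> A \<and> card Y = s}. Lset Y (S - {s}))" by blast
  qed
  show "(\<lambda>xs. xs @ sorted_list_of_set (A - set xs)) `
            (\<Union>Y\<in>{Y. Y \<subseteq> A \<and> card Y = s}. Lset Y (S - {s})) \<subseteq> Lset A S"
  proof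
    fix xx assume "xx \<in> (\<lambda>xs. xs @ sorted_list_of_set (A - set xs)) `
            (\<Union>Y\<in>{Y. Y \<subseteq> A \<and> card Y = s}. Lset Y (S - {s}))"
    then obtain xs1 Y where xx: "xx = xs1 @ sorted_list_of_set (A - set xs1)"
      and Y: "Y \<subseteq> A" "card Y = s" and x1: "xs1 \<in> Lset Y (S - {s})" by blast
    from x1 have d1: "distinct xs1" and st1: "set xs1 = Y" and ld1: "ldesc xs1 \<subseteq> S - {s}"
      by (auto simp: Lset_def)
    define ys where "ys = sorted_list_of_set (A - set xs1)"
    have fy: "finite (A - set xs1)" using fin by simp
    have dy: "distinct ys" and sy: "sorted ys" and sety: "set ys = A - set xs1"
      using fy by (simp_all add: ys_def)
    have l1: "length xs1 = s" using d1 st1 Y distinct_card by fastforce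
    have "distinct (xs1 @ ys)" using d1 dy sety by auto
    moreover have "set (xs1 @ ys) = A" using sety st1 Y by auto
    moreover have "ldesc (xs1 @ ys) \<subseteq> S" using ldesc_append_sorted[OF sy, of xs1] ld1 l1 sS by auto
    ultimately show "xx \<in> Lset A S"
      by (simp add: Lset_def ys_def xx)
  qed
qed

lemma card_Lset_rec:
  assumes fin: "finite A" and S: "S \<subseteq> {1..<card A}" and ne: "S \<noteq> {}" and s: "s = Max S"
  shows "card (Lset A S) = (\<Sum>Y\<in>{Y. Y \<subseteq> A \<and> card Y = s}. card (Lset Y (S - {s})))"
proof -
  let ?f = "\<lambda>xs. xs @ sorted_list_of_set (A - set xs)"
  let ?U = "\<Union>Y\<in>{Y. Y \<subseteq> A \<and> card Y = s}. Lset Y (S - {s})"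
  have lens: "length xs = s" if "xs \<in> ?U" for xs
    using that distinct_card by (fastforce simp: Lset_def)
  have inj: "inj_on ?f ?U"
  proof (rule inj_onI)
    fix x y assume x: "x \<in> ?U" and y: "y \<in> ?U" and e: "?f x = ?f y"
    have "length x = length y" using lens x y by simp
    then show "x = y" using e by simp
  qed
  have finY: "finite {Y. Y \<subseteq> A \<and> card Y = s}" using fin by simp
  have "card (Lset A S) = card ?U"
    using Lset_rec[OF assms] card_image[OF inj] by simp
  also have "\<dots> = (\<Sum>Y\<in>{Y. Y \<subseteq> A \<and> card Y = s}. card (Lset Y (S - {s})))"
  proof (rule card_UN_disjoint[OF finY])
    show "\<forall>Y\<in>{Y. Y \<subseteq> A \<and> card Y = s}. finite (Lset Y (S - {s}))"
      using fin by (auto intro: finite_Lset finite_subset)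
    show "\<forall>Y\<in>{Y. Y \<subseteq> A \<and> card Y = s}. \<forall>Z\<in>{Y. Y \<subseteq> A \<and> card Y = s}. Y \<noteq> Z \<longrightarrow> Lset Y (S - {s}) \<inter> Lset Z (S - {s}) = {}"
      by (auto simp: Lset_def)
  qed
  finally show ?thesis .
qed

lemma Max_rest:
  assumes "S \<subseteq> {1..<n::nat}" "S \<noteq> {}" "s = Max S"
  shows "S - {s} \<subseteq> {1..<s}" "s \<in> S" "s < n"
proof -
  have f: "finite S" using assms(1) finite_subset by blast
  show "s \<in> S" using f assms by simp
  then show "s < n" using assms by auto
  show "S - {s} \<subseteq> {1..<s}" using f assms by (auto simp: le_neq_implies_less)
qed

lemma card_Lset_uniform:
  assumes "finite A" "S \<subseteq> {1..<card A}"
  shows "card (Lset A S) = card (Lset {0..<card A} S)"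
  using assms
proof (induction "card A" arbitrary: A S rule: less_induct)
  case less
  show ?case
  proof (cases "S = {}")
    case True
    then show ?thesis using less.prems by (simp add: Lset_empty)
  next
    case False
    define s where "s = Max S"
    note mr = Max_rest[OF less.prems(2) False s_def]
    have gen: "card (Lset B S) = (card B choose s) * card (Lset {0..<s} (S - {s}))"
      if B: "finite B" "card B = card A" for B
    proof -
      have "card (Lset B S) = (\<Sum>Y\<in>{Y. Y \<subseteq> B \<and> card Y = s}. card (Lset Y (S - {s})))"
        using card_Lset_rec[OF B(1) _ False s_def] less.prems B by simp
      also have "\<dots> = (\<Sum>Y\<in>{Y. Y \<subseteq> B \<and> card Y = s}. card (Lset {0..<s} (S - {s})))"
      proof (rule sum.cong[OF refl])
        fix Y assume Y: "Y \<in> {Y. Y \<subseteq> B \<and> card Y = s}"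
        then have fY: "finite Y" using B finite_subset by blast
        show "card (Lset Y (S - {s})) = card (Lset {0..<s} (S - {s}))"
          using less.hyps[of Y "S - {s}"] Y fY mr by auto
      qed
      also have "\<dots> = (card B choose s) * card (Lset {0..<s} (S - {s}))"
        using n_subsets[OF B(1), of s] by simp
      finally show ?thesis .
    qed
    show ?thesis using gen[OF less.prems(1) refl] gen[of "{0..<card A}"] by simp
  qed
qed

lemma card_Lset_formula:
  assumes "finite A" "S \<subseteq> {1..<card A}" "S \<noteq> {}" "s = Max S"
  shows "card (Lset A S) = (card A choose s) * card (Lset {0..<s} (S - {s}))"
proof -
  note mr = Max_rest[OF assms(2-4)]
  have "card (Lset A S) = (\<Sum>Y\<in>{Y. Y \<subseteq> A \<and> card Y = s}. card (Lset Y (S - {s})))"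
    using card_Lset_rec[OF assms] .
  also have "\<dots> = (\<Sum>Y\<in>{Y. Y \<subseteq> A \<and> card Y = s}. card (Lset {0..<s} (S - {s})))"
  proof (rule sum.cong[OF refl])
    fix Y assume Y: "Y \<in> {Y. Y \<subseteq> A \<and> card Y = s}"
    then have fY: "finite Y" using assms finite_subset by blast
    show "card (Lset Y (S - {s})) = card (Lset {0..<s} (S - {s}))"
      using card_Lset_uniform[of Y "S - {s}"] Y fY mr by auto
  qed
  also have "\<dots> = (card A choose s) * card (Lset {0..<s} (S - {s}))"
    using n_subsets[OF assms(1), of s] by simp
  finally show ?thesis .
qed


definition chainU :: "nat set \<Rightarrow> nat set \<Rightarrow> bool" where
  "chainU U S \<longleftrightarrow> (\<forall>x\<in>S. \<exists>V\<subseteq>U. x = \<Sum>V) \<and>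
     (\<forall>V W. V \<subseteq> U \<longrightarrow> W \<subseteq> U \<longrightarrow> \<Sum>V \<in> S \<longrightarrow> \<Sum>W \<in> S \<longrightarrow> V \<subseteq> W \<or> W \<subseteq> V)"

lemma chainU_I:
  assumes "\<And>x. x \<in> S \<Longrightarrow> \<exists>V\<subseteq>U. x = \<Sum>V"
    and "\<And>V W. V \<subseteq> U \<Longrightarrow> W \<subseteq> U \<Longrightarrow> \<Sum>V \<in> S \<Longrightarrow> \<Sum>W \<in> S \<Longrightarrow> V \<subseteq> W \<or> W \<subseteq> V"
  shows "chainU U S"
  using assms unfolding chainU_def by blast

lemma chainU_D1: "chainU U S \<Longrightarrow> x \<in> S \<Longrightarrow> \<exists>V\<subseteq>U. x = \<Sum>V"
  unfolding chainU_def by blast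

lemma chainU_D2: "chainU U S \<Longrightarrow> V \<subseteq> U \<Longrightarrow> W \<subseteq> U \<Longrightarrow> \<Sum>V \<in> S \<Longrightarrow> \<Sum>W \<in> S \<Longrightarrow> V \<subseteq> W \<or> W \<subseteq> V"
  unfolding chainU_def by blast

lemma chain_step:
  assumes p2: "p \<ge> 2" and pw: "pw p U" and V0: "V0 \<subseteq> U" "s = \<Sum>V0" and sS: "s \<in> S"
    and sle: "\<forall>x\<in>S. x \<le> s"
  shows "chainU U S \<longleftrightarrow> chainU V0 (S - {s})"
proof
  have finU: "finite U" using pw pw_def by auto
  have msum: "\<Sum>V \<le> \<Sum>W" if "V \<subseteq> W" "W \<subseteq> U" for V W
    using that finU by (intro sum_mono2) (auto intro: finite_subset)
  assume c: "chainU U S"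
  show "chainU V0 (S - {s})"
  proof (rule chainU_I)
    fix x assume x: "x \<in> S - {s}"
    then obtain V where V: "V \<subseteq> U" "x = \<Sum>V" using chainU_D1[OF c] by blast
    have "V \<subseteq> V0 \<or> V0 \<subseteq> V" using chainU_D2[OF c V(1) V0(1)] V(2) V0(2) x sS by simp
    moreover have "\<not> V0 \<subseteq> V"
    proof
      assume "V0 \<subseteq> V"
      then have "s \<le> x" using msum V V0 by simp
      moreover have "x \<le> s" using sle x by simp
      ultimately show False using x by simp
    qed
    ultimately show "\<exists>V\<subseteq>V0. x = \<Sum>V" using V by blast
  next
    fix V W assume a: "V \<subseteq> V0" "W \<subseteq> V0" "\<Sum>V \<in> S - {s}" "\<Sum>W \<in> S - {s}"
    show "V \<subseteq> W \<or> W \<subseteq> V"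
      by (rule chainU_D2[OF c]) (use a V0 in auto)
  qed
next
  assume c: "chainU V0 (S - {s})"
  have sub: "V \<subseteq> V0" if V: "V \<subseteq> U" "\<Sum>V \<in> S" for V
  proof (cases "\<Sum>V = s")
    case True
    have "V = V0" by (rule pw_sum_inj[OF p2]) (use pw_subset[OF pw] V V0 True in auto)
    then show ?thesis by simp
  next
    case False
    then have "\<Sum>V \<in> S - {s}" using V by simp
    then obtain V' where V': "V' \<subseteq> V0" "\<Sum>V = \<Sum>V'" using chainU_D1[OF c] by blast
    have "V = V'" by (rule pw_sum_inj[OF p2]) (use pw_subset[OF pw] V V0 V' in auto)
    then show ?thesis using V' by simp
  qed
  show "chainU U S"
  proof (rule chainU_I)
    fix x assume x: "x \<in> S"
    show "\<exists>V\<subseteq>U. x = \<Sum>V"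
    proof (cases "x = s")
      case True
      then show ?thesis using V0 by blast
    next
      case False
      then obtain V where "V \<subseteq> V0" "x = \<Sum>V" using chainU_D1[OF c, of x] x by blast
      then show ?thesis using V0 by blast
    qed
  next
    fix V W assume VW: "V \<subseteq> U" "W \<subseteq> U" "\<Sum>V \<in> S" "\<Sum>W \<in> S"
    have v: "V \<subseteq> V0" using sub VW by auto
    have w: "W \<subseteq> V0" using sub VW by auto
    show "V \<subseteq> W \<or> W \<subseteq> V"
    proof (cases "\<Sum>V = s")
      case True
      have "V = V0" by (rule pw_sum_inj[OF p2]) (use pw_subset[OF pw] VW V0 True in auto)
      then show ?thesis using w by blast
    next
      case F1: False
      show ?thesis
      proof (cases "\<Sum>W = s")
        case True
        have "W = V0" by (rule pw_sum_inj[OF p2]) (use pw_subset[OF pw] VW V0 True in auto)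
        then show ?thesis using v by blast
      next
        case False
        show ?thesis by (rule chainU_D2[OF c v w]) (use VW F1 False in auto)
      qed
    qed
  qed
qed

lemma Lset_mod:
  assumes p: "prime p" and pw: "pw p U" and fin: "finite A" and cA: "card A = \<Sum>U"
    and S: "S \<subseteq> {1..<card A}"
  shows "[card (Lset A S) = (if chainU U S then 1 else 0)] (mod p)"
  using pw fin cA S
proof (induction "card A" arbitrary: A S U rule: less_induct)
  case less
  have p2: "p \<ge> 2" using p by (simp add: prime_ge_2_nat)
  show ?case
  proof (cases "S = {}")
    case True
    then show ?thesis using less.prems by (simp add: Lset_empty chainU_def)
  next
    case False
    define s where "s = Max S"
    note mr = Max_rest[OF less.prems(4) False s_def]
    have sle: "\<forall>x\<in>S. x \<le> s" using s_def less.prems(4) by (metis Max_ge finite_atLeastLessThan finite_subset)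
    have form: "card (Lset A S) = (card A choose s) * card (Lset {0..<s} (S - {s}))"
      using card_Lset_formula[OF less.prems(2,4) False s_def] .
    have bm: "[card A choose s = (if \<exists>V\<subseteq>U. s = \<Sum>V then 1 else 0)] (mod p)"
      using binom_pw[OF p less.prems(1), of s] less.prems(3) by simp
    show ?thesis
    proof (cases "\<exists>V\<subseteq>U. s = \<Sum>V")
      case True
      then obtain V0 where V0: "V0 \<subseteq> U" "s = \<Sum>V0" by blast
      have IH: "[card (Lset {0..<s} (S - {s})) = (if chainU V0 (S - {s}) then 1 else 0)] (mod p)"
        using less.hyps[of "{0..<s}" V0 "S - {s}"] mr V0 pw_subset[OF less.prems(1)] less.prems by auto
      have "[card (Lset A S) = 1 * (if chainU V0 (S - {s}) then 1 else 0)] (mod p)"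
        unfolding form using cong_mult[OF bm IH] True by simp
      then show ?thesis using chain_step[OF p2 less.prems(1) V0 mr(2) sle] by simp
    next
      case False
      have "[card (Lset A S) = 0 * card (Lset {0..<s} (S - {s}))] (mod p)"
        unfolding form using cong_mult[OF bm cong_refl] False by simp
      moreover have "\<not> chainU U S" using False mr(2) unfolding chainU_def by blast
      ultimately show ?thesis by simp
    qed
  qed
qed


definition Eset :: "nat set \<Rightarrow> nat set \<Rightarrow> nat list set" where
  "Eset A D = {xs. distinct xs \<and> set xs = A \<and> ldesc xs = D}"

lemma card_Lset_sum:
  assumes "finite A" "finite S"
  shows "int (card (Lset A S)) = (\<Sum>T\<in>Pow S. int (card (Eset A T)))"
proof -
  have eq: "Lset A S = (\<Union>T\<in>Pow S. Eset A T)" by (auto simp: Lset_def Eset_def)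
  have fin: "finite (Eset A T)" for T
    using finite_Lset[OF assms(1), of T] by (rule finite_subset[rotated]) (auto simp: Lset_def Eset_def)
  have "card (Lset A S) = (\<Sum>T\<in>Pow S. card (Eset A T))"
    unfolding eq by (rule card_UN_disjoint) (use assms fin in \<open>auto simp: Eset_def\<close>)
  then show ?thesis by simp
qed

lemma Eset_mobius:
  assumes "finite A" "finite D"
  shows "int (card (Eset A D)) = (\<Sum>T\<in>Pow D. (-1) ^ (card D - card T) * int (card (Lset A T)))"
  by (rule inclusion_exclusion_mobius) (use card_Lset_sum[OF assms(1)] assms in auto)

lemma in_Pset: "x \<in> Pset Q \<longleftrightarrow> (\<exists>U. U \<noteq> {} \<and> U \<subset> Q \<and> x = \<Sum>U)"
  unfolding Pset_def by blast

lemma PleE: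
  assumes "Ple S x y"
  obtains U V where "U \<noteq> {}" "U \<subset> S" "V \<noteq> {}" "V \<subset> S" "x = \<Sum>U" "y = \<Sum>V" "U \<subseteq> V"
  using assms unfolding Ple_def by (elim exE conjE) (rule that)
lemma PleI:
  assumes "U \<noteq> {}" "U \<subset> S" "V \<noteq> {}" "V \<subset> S" "U \<subseteq> V"
  shows "Ple S (\<Sum>U) (\<Sum>V)"
  unfolding Ple_def using assms by (intro exI[of _ U] exI[of _ V]) simp

lemma chains_eq:
  assumes p2: "p \<ge> 2" and pw: "pw p Q" and D: "D \<subseteq> {1..<\<Sum>Q}"
  shows "{C. is_chain_in Q (D \<inter> Pset Q) C} = {T\<in>Pow D. chainU Q T}"
proof -
  have finQ: "finite Q" using pw pw_def by auto
  have inj: "V = W" if "V \<subseteq> Q" "W \<subseteq> Q" "\<Sum>V = \<Sum>W" for V W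
    by (rule pw_sum_inj[OF p2]) (use pw_subset[OF pw] that in auto)
  have np: "V \<noteq> {} \<and> V \<subset> Q" if "V \<subseteq> Q" "\<Sum>V \<in> D" for V
  proof -
    have "1 \<le> \<Sum>V" "\<Sum>V < \<Sum>Q" using that D by auto
    then show ?thesis using that by auto
  qed
  show ?thesis
  proof (intro set_eqI iffI)
    fix C assume "C \<in> {C. is_chain_in Q (D \<inter> Pset Q) C}"
    then have C: "C \<subseteq> D \<inter> Pset Q" and cmp: "\<forall>x\<in>C. \<forall>y\<in>C. Ple Q x y \<or> Ple Q y x"
      by (auto simp: is_chain_in_def)
    have "chainU Q C"
    proof (rule chainU_I)
      fix x assume "x \<in> C"
      then show "\<exists>V\<subseteq>Q. x = \<Sum>V" using C in_Pset by blast
    next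
      fix V W assume VW: "V \<subseteq> Q" "W \<subseteq> Q" "\<Sum>V \<in> C" "\<Sum>W \<in> C"
      have le: "A \<subseteq> B" if h: "Ple Q (\<Sum>A) (\<Sum>B)" and AB: "A \<subseteq> Q" "B \<subseteq> Q" for A B
      proof -
        obtain U1 U2 where u0: "U1 \<noteq> {}" "U1 \<subset> Q" "U2 \<noteq> {}" "U2 \<subset> Q" "\<Sum>A = \<Sum>U1" "\<Sum>B = \<Sum>U2" "U1 \<subseteq> U2"
          using h by (rule PleE)
        have "A = U1" using inj AB u0 by (meson psubset_imp_subset)
        moreover have "B = U2" using inj AB u0 by (meson psubset_imp_subset)
        ultimately show ?thesis using u0 by simp
      qed
      have "Ple Q (\<Sum>V) (\<Sum>W) \<or> Ple Q (\<Sum>W) (\<Sum>V)" using cmp VW(3,4) by blast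
      then show "V \<subseteq> W \<or> W \<subseteq> V" using le VW(1,2) by blast
    qed
    moreover have "C \<subseteq> D" using C by blast
    ultimately show "C \<in> {T\<in>Pow D. chainU Q T}" by simp
  next
    fix T assume "T \<in> {T\<in>Pow D. chainU Q T}"
    then have T: "T \<subseteq> D" and c: "chainU Q T" by auto
    have rep: "\<exists>V. V \<subseteq> Q \<and> V \<noteq> {} \<and> V \<subset> Q \<and> x = \<Sum>V" if xT: "x \<in> T" for x
    proof -
      obtain V where V: "V \<subseteq> Q" "x = \<Sum>V" using chainU_D1[OF c xT] by blast
      have "\<Sum>V \<in> D" using T xT V(2) by auto
      then have "V \<noteq> {} \<and> V \<subset> Q" using np V(1) by blast
      then show ?thesis using V by blast
    qed
    have "T \<subseteq> Pset Q" using rep in_Pset by blast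
    moreover have "Ple Q x y \<or> Ple Q y x" if xy: "x \<in> T" "y \<in> T" for x y
    proof -
      obtain V where V: "V \<subseteq> Q" "V \<noteq> {}" "V \<subset> Q" "x = \<Sum>V" using rep xy by blast
      obtain W where W: "W \<subseteq> Q" "W \<noteq> {}" "W \<subset> Q" "y = \<Sum>W" using rep xy by blast
      have "V \<subseteq> W \<or> W \<subseteq> V" using chainU_D2[OF c V(1) W(1)] V W xy by simp
      then show ?thesis using PleI V W by metis
    qed
    ultimately show "T \<in> {C. is_chain_in Q (D \<inter> Pset Q) C}" using T by (auto simp: is_chain_in_def)
  qed
qed


lemma Eset_cong:
  assumes p: "prime p" and pw: "pw p Q" and n: "n = \<Sum>Q" and D: "D \<subseteq> {1..<n}"
  shows "[int (card (Eset {1..n} D)) = (-1) ^ card D * chi Q (D \<inter> Pset Q)] (mod int p)"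
proof -
  have p2: "p \<ge> 2" using p by (simp add: prime_ge_2_nat)
  have finD: "finite D" using D finite_subset by blast
  have "int (card (Eset {1..n} D)) = (\<Sum>T\<in>Pow D. (-1) ^ (card D - card T) * int (card (Lset {1..n} T)))"
    using Eset_mobius[OF _ finD] by simp
  also have "[\<dots> = (\<Sum>T\<in>Pow D. (-1) ^ (card D - card T) * (if chainU Q T then 1 else 0))] (mod int p)"
  proof (rule cong_sum, rule cong_scalar_left)
    fix T assume T: "T \<in> Pow D"
    have "[card (Lset {1..n} T) = (if chainU Q T then 1 else 0)] (mod p)"
      by (rule Lset_mod[OF p pw]) (use T D n in auto)
    then have "[int (card (Lset {1..n} T)) = int (if chainU Q T then 1 else 0)] (mod int p)"
      using cong_int_iff by blast
    then show "[int (card (Lset {1..n} T)) = (if chainU Q T then 1 else 0)] (mod int p)"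
      by (cases "chainU Q T") auto
  qed
  also have "(\<Sum>T\<in>Pow D. (-1) ^ (card D - card T) * (if chainU Q T then 1 else 0) :: int)
      = (\<Sum>T\<in>{T\<in>Pow D. chainU Q T}. (-1) ^ (card D - card T))"
    by (simp add: sum.inter_filter[symmetric] finD if_distrib cong: if_cong)
  also have "\<dots> = (\<Sum>T\<in>{T\<in>Pow D. chainU Q T}. (-1) ^ card D * (-1) ^ card T)"
  proof (rule sum.cong[OF refl])
    fix T assume "T \<in> {T\<in>Pow D. chainU Q T}"
    then have "card T \<le> card D" using finD by (simp add: card_mono)
    then show "((-1::int) ^ (card D - card T)) = (-1) ^ card D * (-1) ^ card T"
      by (simp add: neg_one_power_add_eq_neg_one_power_diff[symmetric] power_add)
  qed
  also have "\<dots> = (-1) ^ card D * chi Q (D \<inter> Pset Q)"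
    unfolding chi_def chains_eq[OF p2 pw D[unfolded n]] by (simp add: sum_distrib_left)
  finally show ?thesis .
qed


lemma perm_descents_ldesc:
  "perm_descents n w = ldesc (map w [1..<Suc n])"
proof -
  have nth: "map w [1..<Suc n] ! j = w (Suc j)" if "j < n" for j
    using that by (simp del: upt_Suc)
  have len: "length (map w [1..<Suc n]) = n" by (simp del: upt_Suc)
  show ?thesis
    unfolding perm_descents_def ldesc_def len
  proof (intro set_eqI iffI)
    fix i assume "i \<in> {i \<in> {1..<n}. w (Suc i) < w i}"
    then show "i \<in> {i. 1 \<le> i \<and> i < n \<and> map w [1..<Suc n] ! i < map w [1..<Suc n] ! (i - 1)}"
      using nth[of i] nth[of "i - 1"] by auto
  next
    fix i assume "i \<in> {i. 1 \<le> i \<and> i < n \<and> map w [1..<Suc n] ! i < map w [1..<Suc n] ! (i - 1)}"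
    then show "i \<in> {i \<in> {1..<n}. w (Suc i) < w i}"
      using nth[of i] nth[of "i - 1"] by auto
  qed
qed

lemma perm_list_inj: "inj_on (\<lambda>w. map w [1..<Suc n]) {w. w permutes {1..n}}"
proof (rule inj_onI)
  fix w v assume w: "w \<in> {w. w permutes {1..n}}" and v: "v \<in> {w. w permutes {1..n}}"
    and e: "map w [1..<Suc n] = map v [1..<Suc n]"
  show "w = v"
  proof
    fix x
    show "w x = v x"
    proof (cases "x \<in> {1..n}")
      case True
      then have "x \<in> set [1..<Suc n]" by auto
      then show ?thesis using e by (metis map_eq_conv)
    next
      case False
      then show ?thesis using w v by (simp add: permutes_not_in)
    qed
  qed
qed

lemma perm_list_image: "(\<lambda>w. map w [1..<Suc n]) ` {w. w permutes {1..n}} = {xs. distinct xs \<and> set xs = {1..n}}"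
proof (intro set_eqI iffI)
  fix xs assume "xs \<in> (\<lambda>w. map w [1..<Suc n]) ` {w. w permutes {1..n}}"
  then obtain w where w: "w permutes {1..n}" and xs: "xs = map w [1..<Suc n]" by blast
  have "distinct xs" using xs permutes_inj[OF w] by (simp add: distinct_map inj_on_subset)
  moreover have "set xs = {1..n}" using xs permutes_image[OF w]
    by (simp del: upt_Suc add: atLeastLessThanSuc_atLeastAtMost)
  ultimately show "xs \<in> {xs. distinct xs \<and> set xs = {1..n}}" by simp
next
  fix xs assume "xs \<in> {xs. distinct xs \<and> set xs = {1..n}}"
  then have d: "distinct xs" and s: "set xs = {1..n}" by auto
  have len: "length xs = n" using d s distinct_card by fastforce
  define w where "w i = (if i \<in> {1..n} then xs ! (i - 1) else i)" for i
  have img: "w ` {1..n} = {1..n}"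
  proof -
    have "w ` {1..n} = (\<lambda>i. xs ! (i - 1)) ` {1..n}" by (simp add: w_def)
    also have "\<dots> = (\<lambda>j. xs ! j) ` {..<n}"
    proof (intro set_eqI iffI)
      fix y assume "y \<in> (\<lambda>i. xs ! (i - 1)) ` {1..n}"
      then obtain i where "i \<in> {1..n}" "y = xs ! (i - 1)" by blast
      then show "y \<in> (\<lambda>j. xs ! j) ` {..<n}" by (intro image_eqI[of _ _ "i - 1"]) auto
    next
      fix y assume "y \<in> (\<lambda>j. xs ! j) ` {..<n}"
      then obtain j where "j < n" "y = xs ! j" by blast
      then show "y \<in> (\<lambda>i. xs ! (i - 1)) ` {1..n}" by (intro image_eqI[of _ _ "Suc j"]) auto
    qed
    also have "\<dots> = set xs" using len by (auto simp: set_conv_nth)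
    finally show ?thesis using s by simp
  qed
  have "inj_on w {1..n}"
  proof (rule inj_onI)
    fix i j assume i: "i \<in> {1..n}" and j: "j \<in> {1..n}" and e: "w i = w j"
    then have "xs ! (i - 1) = xs ! (j - 1)" by (simp add: w_def)
    then have "i - 1 = j - 1" using d len i j nth_eq_iff_index_eq by fastforce
    then show "i = j" using i j by auto
  qed
  then have "bij_betw w {1..n} {1..n}" using img by (simp add: bij_betw_def)
  then have wp: "w permutes {1..n}" by (rule bij_imp_permutes) (auto simp: w_def)
  have "map w [1..<Suc n] = xs"
    by (rule nth_equalityI) (auto simp del: upt_Suc simp: len w_def)
  then show "xs \<in> (\<lambda>w. map w [1..<Suc n]) ` {w. w permutes {1..n}}" using wp by blast
qed

lemma card_perm_desc:
  "card {w. w permutes {1..n} \<and> perm_descents n w = D} = card (Eset {1..n} D)"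
proof -
  let ?f = "\<lambda>w. map w [1..<Suc n]"
  have "?f ` {w. w permutes {1..n} \<and> perm_descents n w = D} = Eset {1..n} D"
  proof -
    have "?f ` {w. w permutes {1..n} \<and> perm_descents n w = D}
        = {xs \<in> ?f ` {w. w permutes {1..n}}. ldesc xs = D}"
      by (auto simp: perm_descents_ldesc)
    then show ?thesis unfolding perm_list_image Eset_def by auto
  qed
  moreover have "inj_on ?f {w. w permutes {1..n} \<and> perm_descents n w = D}"
    by (rule inj_on_subset[OF perm_list_inj]) auto
  ultimately show ?thesis by (metis card_image)
qed

lemma ribbon_Eset: "sum_list \<alpha> = n \<Longrightarrow> ribbon \<alpha> = card (Eset {1..n} (comp_descents \<alpha>))"
  unfolding ribbon_def using card_perm_desc by simp


lemma cd_Cons: "comp_descents (a # \<beta>) = (if \<beta> = [] then {} else insert a ((+) a ` comp_descents \<beta>))"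
proof (cases "\<beta> = []")
  case True
  then show ?thesis by (simp add: comp_descents_def)
next
  case False
  have "comp_descents (a # \<beta>) = insert a ((+) a ` comp_descents \<beta>)"
  proof (intro set_eqI iffI)
    fix x assume "x \<in> comp_descents (a # \<beta>)"
    then obtain j where j: "1 \<le> j" "j < length (a # \<beta>)" "x = sum_list (take j (a # \<beta>))"
      unfolding comp_descents_def by blast
    then obtain j' where j': "j = Suc j'" by (cases j) auto
    show "x \<in> insert a ((+) a ` comp_descents \<beta>)"
    proof (cases "j' = 0")
      case True
      then show ?thesis using j j' by simp
    next
      case False
      then have "sum_list (take j' \<beta>) \<in> comp_descents \<beta>"
        using j j' unfolding comp_descents_def by auto
      then show ?thesis using j j' by simp
    qed
  next
    fix x assume "x \<in> insert a ((+) a ` comp_descents \<beta>)"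
    then consider "x = a" | y where "y \<in> comp_descents \<beta>" "x = a + y" by blast
    then show "x \<in> comp_descents (a # \<beta>)"
    proof cases
      case 1
      then have "x = sum_list (take 1 (a # \<beta>))" by simp
      then show ?thesis using False unfolding comp_descents_def by fastforce
    next
      case 2
      then obtain j where j: "1 \<le> j" "j < length \<beta>" "y = sum_list (take j \<beta>)"
        unfolding comp_descents_def by blast
      then have "x = sum_list (take (Suc j) (a # \<beta>))" using 2 by simp
      moreover have "1 \<le> Suc j" "Suc j < length (a # \<beta>)" using j by auto
      ultimately show ?thesis unfolding comp_descents_def by blast
    qed
  qed
  then show ?thesis using False by simp
qed

lemma comp_Cons: "a # \<beta> \<in> compositions n \<longleftrightarrow> 0 < a \<and> a \<le> n \<and> \<beta> \<in> compositions (n - a)"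
  unfolding compositions_def by auto

lemma comp_Nil: "[] \<in> compositions n \<longleftrightarrow> n = 0"
  unfolding compositions_def by auto

lemma comp_zero: "\<beta> \<in> compositions 0 \<Longrightarrow> \<beta> = []"
  unfolding compositions_def by (cases \<beta>) auto

lemma cd_range: "\<alpha> \<in> compositions n \<Longrightarrow> comp_descents \<alpha> \<subseteq> {1..<n}"
proof (induction \<alpha> arbitrary: n)
  case Nil
  then show ?case by (simp add: comp_descents_def)
next
  case (Cons a \<beta>)
  have a: "0 < a" "a \<le> n" and b: "\<beta> \<in> compositions (n - a)" using Cons.prems by (auto simp: comp_Cons)
  show ?case
  proof (cases "\<beta> = []")
    case True
    then show ?thesis by (simp add: cd_Cons)
  next
    case False
    have "n - a \<noteq> 0"
    proof
      assume "n - a = 0"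
      then have "\<beta> = []" using b comp_zero by simp
      then show False using False by simp
    qed
    then have "a < n" using a by simp
    moreover have "comp_descents \<beta> \<subseteq> {1..<n - a}" using Cons.IH b by blast
    then have "\<forall>x\<in>comp_descents \<beta>. 1 \<le> x \<and> x < n - a" by auto
    ultimately show ?thesis using a False by (auto simp: cd_Cons)
  qed
qed

lemma cd_inj_aux:
  "\<alpha> \<in> compositions n \<Longrightarrow> \<beta> \<in> compositions n \<Longrightarrow> comp_descents \<alpha> = comp_descents \<beta> \<Longrightarrow> \<alpha> = \<beta>"
proof (induction \<alpha> arbitrary: n \<beta>)
  case Nil
  from Nil.prems(1) have "n = 0" by (simp add: comp_Nil)
  then have "\<beta> = []" using Nil.prems(2) comp_zero by simp
  then show ?case by simp
next
  case (Cons a \<alpha>')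
  have a: "0 < a" "a \<le> n" and a': "\<alpha>' \<in> compositions (n - a)" using Cons.prems(1) by (auto simp: comp_Cons)
  have "\<beta> \<noteq> []"
  proof
    assume "\<beta> = []"
    then have "n = 0" using Cons.prems(2) by (simp add: comp_Nil)
    then show False using a by simp
  qed
  then obtain b \<beta>' where \<beta>: "\<beta> = b # \<beta>'" by (cases \<beta>) auto
  have b: "0 < b" "b \<le> n" and b': "\<beta>' \<in> compositions (n - b)" using Cons.prems(2) \<beta> by (auto simp: comp_Cons)
  have eq: "comp_descents (a # \<alpha>') = comp_descents (b # \<beta>')" using Cons.prems(3) \<beta> by simp
  show ?case
  proof (cases "\<alpha>' = []")
    case True
    then have "comp_descents (b # \<beta>') = {}" using eq by (simp add: cd_Cons)
    then have "\<beta>' = []" by (simp add: cd_Cons split: if_splits)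
    then have "b = n" using b' comp_Nil b by simp
    moreover have "a = n" using a' comp_Nil a True by simp
    ultimately show ?thesis using True \<open>\<beta>' = []\<close> \<beta> by simp
  next
    case False
    then have "\<beta>' \<noteq> []" using eq by (auto simp: cd_Cons)
    then have eq2: "insert a ((+) a ` comp_descents \<alpha>') = insert b ((+) b ` comp_descents \<beta>')"
      using eq False by (simp add: cd_Cons)
    have ra: "comp_descents \<alpha>' \<subseteq> {1..<n - a}" using cd_range[OF a'] .
    have rb: "comp_descents \<beta>' \<subseteq> {1..<n - b}" using cd_range[OF b'] .
    have gta: "\<forall>x\<in>(+) a ` comp_descents \<alpha>'. a < x" using ra by auto
    have gtb: "\<forall>x\<in>(+) b ` comp_descents \<beta>'. b < x" using rb by auto
    have "a = b"
    proof (rule ccontr)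
      assume "a \<noteq> b"
      have "a \<in> insert b ((+) b ` comp_descents \<beta>')" using eq2 by (metis insertI1)
      moreover have "b \<in> insert a ((+) a ` comp_descents \<alpha>')" using eq2 by (metis insertI1)
      ultimately have "a \<in> (+) b ` comp_descents \<beta>'" "b \<in> (+) a ` comp_descents \<alpha>'"
        using \<open>a \<noteq> b\<close> by auto
      then have "b < a" "a < b" using gta gtb by blast+
      then show False by simp
    qed
    have n1: "a \<notin> (+) a ` comp_descents \<alpha>'" using gta by blast
    have n2: "a \<notin> (+) a ` comp_descents \<beta>'" using gtb \<open>a = b\<close> by blast
    have "(+) a ` comp_descents \<alpha>' = insert a ((+) a ` comp_descents \<alpha>') - {a}" using n1 by simp
    also have "\<dots> = insert a ((+) a ` comp_descents \<beta>') - {a}" using eq2 \<open>a = b\<close> by simp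
    also have "\<dots> = (+) a ` comp_descents \<beta>'" using n2 by simp
    finally have "(+) a ` comp_descents \<alpha>' = (+) a ` comp_descents \<beta>'" .
    moreover have "inj ((+) a)" by (simp add: inj_def)
    ultimately have "comp_descents \<alpha>' = comp_descents \<beta>'" by (simp add: inj_image_eq_iff)
    then have "\<alpha>' = \<beta>'" using Cons.IH[OF a'] b' \<open>a = b\<close> by simp
    then show ?thesis using \<beta> \<open>a = b\<close> by simp
  qed
qed

lemma cd_inj: "inj_on comp_descents (compositions n)"
  using cd_inj_aux by (meson inj_onI)

lemma cd_surj: "D \<subseteq> {1..<n} \<Longrightarrow> 0 < n \<Longrightarrow> \<exists>\<alpha>\<in>compositions n. comp_descents \<alpha> = D"
proof (induction n arbitrary: D rule: less_induct)
  case (less n)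
  show ?case
  proof (cases "D = {}")
    case True
    have "[n] \<in> compositions n" using less.prems unfolding compositions_def by simp
    moreover have "comp_descents [n] = {}" by (simp add: cd_Cons)
    ultimately show ?thesis using True by blast
  next
    case False
    have finD: "finite D" using less.prems(1) by (rule finite_subset) simp
    define a where "a = Min D"
    have aD: "a \<in> D" using a_def finD False by simp
    have amin: "\<forall>x\<in>D. a \<le> x" using a_def finD by simp
    have a1: "1 \<le> a" "a < n" using aD less.prems by auto
    define D' where "D' = (\<lambda>x. x - a) ` (D - {a})"
    have D': "D' \<subseteq> {1..<n - a}"
    proof
      fix y assume "y \<in> D'"
      then obtain x where x: "x \<in> D" "x \<noteq> a" "y = x - a" unfolding D'_def by blast
      have "a \<le> x" using amin x(1) by blast
      then have "a < x" using x(2) by simp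
      moreover have "x < n" using less.prems(1) x(1) by auto
      ultimately have "a < x" "x < n" by auto
      then show "y \<in> {1..<n - a}" using x by auto
    qed
    have na: "n - a < n" "0 < n - a" using a1 by auto
    obtain \<beta> where \<beta>: "\<beta> \<in> compositions (n - a)" "comp_descents \<beta> = D'"
      using less.IH[OF na(1) D' na(2)] by blast
    have "\<beta> \<noteq> []"
    proof
      assume "\<beta> = []"
      then have "n - a = 0" using \<beta>(1) by (simp add: comp_Nil)
      then show False using na by simp
    qed
    then have "comp_descents (a # \<beta>) = insert a ((+) a ` D')" using \<beta> by (simp add: cd_Cons)
    also have "(+) a ` D' = D - {a}"
    proof -
      have "(+) a ` D' = (\<lambda>x. a + (x - a)) ` (D - {a})" unfolding D'_def by (simp add: image_image)
      also have "\<dots> = (\<lambda>x. x) ` (D - {a})"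
        by (rule image_cong[OF refl]) (use amin in auto)
      finally show ?thesis by simp
    qed
    also have "insert a (D - {a}) = D" using aD by auto
    finally have "comp_descents (a # \<beta>) = D" .
    moreover have "a # \<beta> \<in> compositions n" using \<beta>(1) a1 by (simp add: comp_Cons)
    ultimately show ?thesis by blast
  qed
qed

lemma cd_image: assumes n: "0 < n" shows "comp_descents ` compositions n = Pow {1..<n}"
proof (intro equalityI subsetI)
  fix D assume "D \<in> comp_descents ` compositions n"
  then show "D \<in> Pow {1..<n}" using cd_range by blast
next
  fix D assume D: "D \<in> Pow {1..<n}"
  obtain \<alpha> where "\<alpha> \<in> compositions n" "comp_descents \<alpha> = D" using cd_surj[of D n] D n by auto
  then show "D \<in> comp_descents ` compositions n" by blast
qed


lemma split_count:
  assumes fP: "finite P" and fF: "finite F" and disj: "P \<inter> F = {}"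
  shows "card {D. D \<subseteq> P \<union> F \<and> \<Phi> (D \<inter> P) (card D)}
       = (\<Sum>T\<in>Pow P. card {R. R \<subseteq> F \<and> \<Phi> T (card T + card R)})"
proof -
  define G where "G T = {R. R \<subseteq> F \<and> \<Phi> T (card T + card R)}" for T
  have eq: "{D. D \<subseteq> P \<union> F \<and> \<Phi> (D \<inter> P) (card D)} = (\<Union>T\<in>Pow P. (\<lambda>R. T \<union> R) ` G T)"
  proof (intro equalityI subsetI)
    fix D assume "D \<in> {D. D \<subseteq> P \<union> F \<and> \<Phi> (D \<inter> P) (card D)}"
    then have D: "D \<subseteq> P \<union> F" "\<Phi> (D \<inter> P) (card D)" by auto
    have split: "D = (D \<inter> P) \<union> (D \<inter> F)" using D(1) by blast
    have "card D = card (D \<inter> P) + card (D \<inter> F)"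
      using fP fF disj by (subst split) (rule card_Un_disjoint, auto)
    then have "D \<inter> F \<in> G (D \<inter> P)" using D unfolding G_def by auto
    then have "D \<in> (\<lambda>R. (D \<inter> P) \<union> R) ` G (D \<inter> P)" using split by blast
    moreover have "D \<inter> P \<in> Pow P" by blast
    ultimately show "D \<in> (\<Union>T\<in>Pow P. (\<lambda>R. T \<union> R) ` G T)" by blast
  next
    fix D assume "D \<in> (\<Union>T\<in>Pow P. (\<lambda>R. T \<union> R) ` G T)"
    then obtain T R where T: "T \<subseteq> P" and R: "R \<subseteq> F" "\<Phi> T (card T + card R)" and D: "D = T \<union> R"
      unfolding G_def by blast
    have "D \<inter> P = T" using T R disj D by blast
    moreover have "card D = card T + card R"
      unfolding D using T R fP fF disj by (intro card_Un_disjoint) (auto intro: finite_subset)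
    moreover have "D \<subseteq> P \<union> F" using D T R by blast
    ultimately show "D \<in> {D. D \<subseteq> P \<union> F \<and> \<Phi> (D \<inter> P) (card D)}" using R by simp
  qed
  have inj: "inj_on (\<lambda>R. T \<union> R) (G T)" if "T \<subseteq> P" for T
  proof (rule inj_onI)
    fix R1 R2 assume "R1 \<in> G T" "R2 \<in> G T" "T \<union> R1 = T \<union> R2"
    then show "R1 = R2" using that disj unfolding G_def by blast
  qed
  have finG: "finite (G T)" for T
    using fF unfolding G_def by (rule finite_subset[rotated, OF finite_Pow_iff[THEN iffD2]]) auto
  have "card (\<Union>T\<in>Pow P. (\<lambda>R. T \<union> R) ` G T) = (\<Sum>T\<in>Pow P. card ((\<lambda>R. T \<union> R) ` G T))"
  proof (rule card_UN_disjoint)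
    show "finite (Pow P)" using fP by simp
    show "\<forall>T\<in>Pow P. finite ((\<lambda>R. T \<union> R) ` G T)" using finG by simp
    show "\<forall>T1\<in>Pow P. \<forall>T2\<in>Pow P. T1 \<noteq> T2 \<longrightarrow> (\<lambda>R. T1 \<union> R) ` G T1 \<inter> (\<lambda>R. T2 \<union> R) ` G T2 = {}"
    proof (intro ballI impI)
      fix T1 T2 assume T: "T1 \<in> Pow P" "T2 \<in> Pow P" "T1 \<noteq> T2"
      show "(\<lambda>R. T1 \<union> R) ` G T1 \<inter> (\<lambda>R. T2 \<union> R) ` G T2 = {}"
      proof (rule ccontr)
        assume "(\<lambda>R. T1 \<union> R) ` G T1 \<inter> (\<lambda>R. T2 \<union> R) ` G T2 \<noteq> {}"
        then obtain R1 R2 where R: "R1 \<in> G T1" "R2 \<in> G T2" "T1 \<union> R1 = T2 \<union> R2" by blast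
        have "R1 \<subseteq> F" "R2 \<subseteq> F" using R unfolding G_def by auto
        then have "(T1 \<union> R1) \<inter> P = T1" "(T2 \<union> R2) \<inter> P = T2" using T disj by blast+
        then show False using R(3) T(3) by simp
      qed
    qed
  qed
  also have "\<dots> = (\<Sum>T\<in>Pow P. card (G T))"
    by (rule sum.cong[OF refl]) (use inj in \<open>simp add: card_image\<close>)
  finally show ?thesis unfolding eq G_def .
qed

lemma half_count:
  assumes "finite F" "F \<noteq> {}"
  shows "card {R. R \<subseteq> F \<and> even (c + card R)} = 2 ^ (card F - 1)"
    and "card {R. R \<subseteq> F \<and> odd (c + card R)} = 2 ^ (card F - 1)"
proof -
  have eo: "card {R. R \<subseteq> F \<and> {} \<subseteq> R \<and> even (card R)} = card {R. R \<subseteq> F \<and> {} \<subseteq> R \<and> odd (card R)}"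
    using card_subsupersets_even_odd[OF assms(1), of "{}"] assms(2) by blast
  have e: "card {R. R \<subseteq> F \<and> even (card R)} = card {R. R \<subseteq> F \<and> odd (card R)}" using eo by simp
  have "Pow F = {R. R \<subseteq> F \<and> even (card R)} \<union> {R. R \<subseteq> F \<and> odd (card R)}" by auto
  then have "2 ^ card F = card {R. R \<subseteq> F \<and> even (card R)} + card {R. R \<subseteq> F \<and> odd (card R)}"
    using assms(1) by (metis (no_types, lifting) card_Pow card_Un_disjoint disjoint_iff finite_Pow_iff
        finite_subset mem_Collect_eq subsetI Un_upper1 Un_upper2)
  moreover have "(2::nat) ^ card F = 2 * 2 ^ (card F - 1)"
    using assms by (metis card_gt_0_iff power_eq_if not_gr0 less_irrefl)
  ultimately have he: "card {R. R \<subseteq> F \<and> even (card R)} = 2 ^ (card F - 1)"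
    and ho: "card {R. R \<subseteq> F \<and> odd (card R)} = 2 ^ (card F - 1)" using e by linarith+
  show "card {R. R \<subseteq> F \<and> even (c + card R)} = 2 ^ (card F - 1)"
  proof (cases "even c")
    case True
    then show ?thesis using he by simp
  next
    case False
    then show ?thesis using ho by simp
  qed
  show "card {R. R \<subseteq> F \<and> odd (c + card R)} = 2 ^ (card F - 1)"
  proof (cases "even c")
    case True
    then show ?thesis using ho by simp
  next
    case False
    then show ?thesis using he by simp
  qed
qed


lemma sum_if_const:
  assumes "finite A"
  shows "(\<Sum>x\<in>A. if \<phi> x then c else 0) = (c::nat) * card {x\<in>A. \<phi> x}"
proof -
  have "(\<Sum>x\<in>A. if \<phi> x then c else 0) = (\<Sum>x\<in>{x\<in>A. \<phi> x}. c)"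
    using sum.inter_filter[OF assms, of "\<lambda>_. c" \<phi>] by simp
  then show ?thesis by simp
qed

lemma Pset_range:
  assumes p2: "p \<ge> 2" and pw: "pw p Q"
  shows "Pset Q \<subseteq> {1..<\<Sum>Q}"
proof
  fix x assume "x \<in> Pset Q"
  then obtain U where U: "U \<noteq> {}" "U \<subset> Q" "x = \<Sum>U" unfolding in_Pset by blast
  have finQ: "finite Q" using pw pw_def by auto
  have finU: "finite U" using U(2) finQ finite_subset by auto
  have pos: "\<And>y. y \<in> Q \<Longrightarrow> y > 0" using pw_pos[OF pw] p2 by simp
  obtain u where u: "u \<in> U" using U(1) by blast
  have "u \<le> \<Sum>U" using finU u by (simp add: sum.remove)
  moreover have "u > 0" using pos u U(2) by blast
  ultimately have x1: "1 \<le> x" using U(3) by simp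
  obtain q where q: "q \<in> Q" "q \<notin> U" using U(2) by blast
  have "\<Sum>Q = \<Sum>U + \<Sum>(Q - U)" using finQ U(2)
    by (metis psubset_imp_subset sum.subset_diff add.commute)
  moreover have "q \<le> \<Sum>(Q - U)" using q finQ by (simp add: sum.remove)
  moreover have "q > 0" using pos q by blast
  ultimately have "x < \<Sum>Q" using U(3) by linarith
  then show "x \<in> {1..<\<Sum>Q}" using x1 by simp
qed

lemma Pset_card:
  assumes p2: "p \<ge> 2" and pw: "pw p Q" and ne: "Q \<noteq> {}"
  shows "card (Pset Q) = 2 ^ card Q - 2"
proof -
  have finQ: "finite Q" using pw pw_def by auto
  have eq: "Pset Q = (\<lambda>U. \<Sum>U) ` (Pow Q - {{}, Q})"
    unfolding Pset_def by auto
  have inj: "inj_on (\<lambda>U. \<Sum>U) (Pow Q - {{}, Q})"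
  proof (rule inj_onI)
    fix U V assume "U \<in> Pow Q - {{}, Q}" "V \<in> Pow Q - {{}, Q}" "\<Sum>U = \<Sum>V"
    then show "U = V" using pw_sum_inj[OF p2] pw_subset[OF pw] by blast
  qed
  have "card (Pow Q - {{}, Q}) = card (Pow Q) - card {{}, Q}"
    by (rule card_Diff_subset) (use finQ in auto)
  also have "\<dots> = 2 ^ card Q - 2" using finQ ne by (simp add: card_Pow)
  finally show ?thesis unfolding eq using card_image[OF inj] by simp
qed

lemma c_count_eq:
  assumes "0 < n"
  shows "c_count p i n = card {D. D \<subseteq> {1..<n} \<and> [card (Eset {1..n} D) = i] (mod p)}"
proof -
  let ?S = "{\<alpha> \<in> compositions n. [card (Eset {1..n} (comp_descents \<alpha>)) = i] (mod p)}"
  have r: "ribbon \<alpha> = card (Eset {1..n} (comp_descents \<alpha>))" if "\<alpha> \<in> compositions n" for \<alpha>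
    using that ribbon_Eset unfolding compositions_def by simp
  have "{\<alpha> \<in> compositions n. [ribbon \<alpha> = i] (mod p)} = ?S"
  proof (rule Collect_cong)
    fix \<alpha>
    show "(\<alpha> \<in> compositions n \<and> [ribbon \<alpha> = i] (mod p)) =
          (\<alpha> \<in> compositions n \<and> [card (Eset {1..n} (comp_descents \<alpha>)) = i] (mod p))"
      using r[of \<alpha>] by auto
  qed
  then have c: "c_count p i n = card ?S" unfolding c_count_def by simp
  have img: "comp_descents ` ?S = {D. D \<subseteq> {1..<n} \<and> [card (Eset {1..n} D) = i] (mod p)}"
  proof (intro equalityI subsetI)
    fix D assume "D \<in> comp_descents ` ?S"
    then obtain \<alpha> where a: "\<alpha> \<in> ?S" "D = comp_descents \<alpha>" by blast
    have "\<alpha> \<in> compositions n" using a(1) by simp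
    then have "comp_descents \<alpha> \<in> comp_descents ` compositions n" by (rule imageI)
    then have "D \<in> Pow {1..<n}" using cd_image[OF assms] a(2) by simp
    moreover have "[card (Eset {1..n} D) = i] (mod p)" using a by simp
    ultimately show "D \<in> {D. D \<subseteq> {1..<n} \<and> [card (Eset {1..n} D) = i] (mod p)}" by simp
  next
    fix D assume D: "D \<in> {D. D \<subseteq> {1..<n} \<and> [card (Eset {1..n} D) = i] (mod p)}"
    then have "D \<in> comp_descents ` compositions n" using cd_image[OF assms] by simp
    then obtain \<alpha> where a: "\<alpha> \<in> compositions n" "D = comp_descents \<alpha>" by (rule imageE)
    then have "\<alpha> \<in> ?S" using D by simp
    then show "D \<in> comp_descents ` ?S" using a(2) by (rule rev_image_eqI)
  qed
  have "inj_on comp_descents ?S" by (rule inj_on_subset[OF cd_inj]) auto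
  then have "card (comp_descents ` ?S) = card ?S" by (rule card_image)
  then show ?thesis using c img by simp
qed

lemma c_count_chi:
  assumes p: "prime p" and pw: "pw p Q" and n: "n = \<Sum>Q" "0 < n"
  shows "c_count p i n = card {D. D \<subseteq> Pset Q \<union> ({1..<n} - Pset Q) \<and>
      [(-1) ^ card (D) * chi Q (D \<inter> Pset Q) = int i] (mod int p)}"
proof -
  have p2: "p \<ge> 2" using p by (simp add: prime_ge_2_nat)
  have PX: "Pset Q \<subseteq> {1..<n}" using Pset_range[OF p2 pw] n by simp
  have un: "Pset Q \<union> ({1..<n} - Pset Q) = {1..<n}" using PX by blast
  have "{D. D \<subseteq> {1..<n} \<and> [card (Eset {1..n} D) = i] (mod p)}
      = {D. D \<subseteq> {1..<n} \<and> [(-1) ^ card (D) * chi Q (D \<inter> Pset Q) = int i] (mod int p)}"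
  proof (intro Collect_cong conj_cong refl)
    fix D assume D: "D \<subseteq> {1..<n}"
    have e: "[int (card (Eset {1..n} D)) = (-1) ^ card D * chi Q (D \<inter> Pset Q)] (mod int p)"
      by (rule Eset_cong[OF p pw n(1) D])
    have "[card (Eset {1..n} D) = i] (mod p) \<longleftrightarrow> [int (card (Eset {1..n} D)) = int i] (mod int p)"
      by (simp add: cong_int_iff)
    also have "\<dots> \<longleftrightarrow> [(-1) ^ card D * chi Q (D \<inter> Pset Q) = int i] (mod int p)"
      using e by (meson cong_sym cong_trans)
    finally show "[card (Eset {1..n} D) = i] (mod p) \<longleftrightarrow> [(-1) ^ card D * chi Q (D \<inter> Pset Q) = int i] (mod int p)" .
  qed
  then show ?thesis using c_count_eq[OF n(2), of p i] unfolding un by simp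
qed

lemma signA:
  assumes "p = 2 \<or> i = 0"
  shows "[(-1) ^ c * x = int i] (mod int p) \<longleftrightarrow> [x = int i] (mod int p)"
proof (cases "even c")
  case True
  then show ?thesis by simp
next
  case False
  then have m: "(-1::int) ^ c = -1" by simp
  show ?thesis
  proof (cases "p = 2")
    case True
    have "2 dvd (- x - int i) \<longleftrightarrow> 2 dvd (x - int i)" by presburger
    then show ?thesis using True m by (simp add: cong_iff_dvd_diff)
  next
    case False
    then have "i = 0" using assms by simp
    then show ?thesis using m by (simp add: cong_0_iff)
  qed
qed

lemma signB:
  "[(-1) ^ c * x = int i] (mod int p) \<longleftrightarrow>
     (even c \<and> [x = int i] (mod int p)) \<or> (odd c \<and> [x = - int i] (mod int p))"
proof (cases "even c")
  case True
  then show ?thesis by simp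
next
  case False
  then have m: "(-1::int) ^ c = -1" by simp
  have "[- x = int i] (mod int p) \<longleftrightarrow> [x = - int i] (mod int p)"
    by (simp add: cong_iff_dvd_diff) (metis dvd_minus_iff minus_diff_eq diff_minus_eq_add add.commute uminus_add_conv_diff)
  then show ?thesis using m False by simp
qed

lemma exclusive:
  assumes p: "prime p" "p > 2" and i: "1 \<le> i" "i < p"
  shows "\<not> ([x = int i] (mod int p) \<and> [x = - int i] (mod int p))"
proof
  assume a: "[x = int i] (mod int p) \<and> [x = - int i] (mod int p)"
  then have "[int i = - int i] (mod int p)" by (meson cong_sym cong_trans)
  then have "int p dvd (int i - (- int i))" by (simp add: cong_iff_dvd_diff)
  then have "int p dvd int (2 * i)" by simp
  then have "p dvd 2 * i" by (simp only: of_nat_dvd_iff)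
  then have "p dvd 2 \<or> p dvd i" using p(1) prime_dvd_mult_iff by blast
  moreover have "\<not> p dvd 2" using p(2) by (auto dest: dvd_imp_le)
  moreover have "\<not> p dvd i" using i by (auto dest: dvd_imp_le)
  ultimately show False by blast
qed

lemma pow_gap:
  fixes p :: nat
  assumes "p \<ge> 2" "x = p ^ g" "m = p ^ e" "m \<le> x" "x \<noteq> m"
  shows "p * m \<le> x"
proof -
  have "e \<le> g" using assms power_le_imp_le_exp[of p e g] by simp
  moreover have "e \<noteq> g" using assms by auto
  ultimately have "Suc e \<le> g" by simp
  then have "p ^ Suc e \<le> p ^ g" using assms(1) by (intro power_increasing) auto
  then show ?thesis using assms by simp
qed

lemma F_nonempty:
  assumes p3: "p \<ge> 3" and pw: "pw p Q" and cQ: "card Q \<ge> 2"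
  shows "{1..<\<Sum>Q} - Pset Q \<noteq> {}"
proof -
  have p2: "p \<ge> 2" using p3 by simp
  have finQ: "finite Q" using pw pw_def by auto
  have ne: "Q \<noteq> {}" using cQ by auto
  define m where "m = Min Q"
  have mQ: "m \<in> Q" using m_def finQ ne by simp
  have mmin: "\<forall>y\<in>Q. m \<le> y" using m_def finQ by simp
  obtain e where e: "m = p ^ e" using mQ pw unfolding pw_def by blast
  have m1: "m \<ge> 1" using e p2 by simp
  have "card (Q - {m}) \<ge> 1" using cQ mQ finQ by simp
  then have "Q - {m} \<noteq> {}" by (metis card.empty not_one_le_zero)
  then obtain q where "q \<in> Q - {m}" by blast
  then have q: "q \<in> Q" "q \<noteq> m" by auto
  obtain f where f: "q = p ^ f" using q pw unfolding pw_def by blast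
  have "p * m \<le> q" using pow_gap[OF p2 f e] mmin q by simp
  then have q3: "3 * m \<le> q" using p3 by (meson le_trans mult_le_mono1)
  have "\<Sum>{m, q} \<le> \<Sum>Q" using mQ q finQ by (intro sum_mono2) auto
  then have "m + q \<le> \<Sum>Q" using q by simp
  then have in1: "2 * m \<in> {1..<\<Sum>Q}" using q3 m1 by simp
  have notP: "2 * m \<notin> Pset Q"
  proof
    assume "2 * m \<in> Pset Q"
    then obtain V where V: "V \<noteq> {}" "V \<subset> Q" "2 * m = \<Sum>V" unfolding in_Pset by blast
    have finV: "finite V" using V(2) finQ finite_subset by auto
    have "V \<subseteq> {m}"
    proof
      fix v assume v: "v \<in> V"
      have vle: "v \<le> \<Sum>V" using finV v by (simp add: sum.remove)
      have vQ: "v \<in> Q" using v V(2) by blast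
      obtain g where vp: "v = p ^ g" using vQ pw unfolding pw_def by blast
      show "v \<in> {m}"
      proof (rule ccontr)
        assume "v \<notin> {m}"
        then have "v \<noteq> m" by simp
        moreover have "m \<le> v" using mmin vQ by blast
        ultimately have "p * m \<le> v" using pow_gap[OF p2 vp e] by simp
        moreover have "3 * m \<le> p * m" using p3 by simp
        ultimately have "3 * m \<le> 2 * m" using vle V(3) by linarith
        then show False using m1 by simp
      qed
    qed
    then have "\<Sum>V \<le> \<Sum>{m}" by (intro sum_mono2) auto
    then have "\<Sum>V \<le> m" by simp
    then show False using V(3) m1 by simp
  qed
  show ?thesis using in1 notP by blast
qed


theorem corollary3p5:
  fixes p n i :: nat and ds :: "nat list"
  assumes "prime p"
    and "sorted_wrt (<) ds"
    and "length ds > 1"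
    and "n = (\<Sum>d\<leftarrow>ds. p ^ d)"
    and "i < p"
  shows "(p = 2 \<or> i = 0 \<longrightarrow>
            c_count p i n = 2 ^ (n + 1 - 2 ^ length ds) *
              card {T. T \<subseteq> Pset ((\<lambda>d. p ^ d) ` set ds) \<and>
                 [chi ((\<lambda>d. p ^ d) ` set ds) T = int i] (mod int p)})
       \<and> (p > 2 \<and> i \<in> {1..p-1} \<longrightarrow>
            c_count p i n = 2 ^ (n - 2 ^ length ds) *
              card {T. T \<subseteq> Pset ((\<lambda>d. p ^ d) ` set ds) \<and>
                 ([chi ((\<lambda>d. p ^ d) ` set ds) T = int i] (mod int p) \<or>
                  [chi ((\<lambda>d. p ^ d) ` set ds) T = - int i] (mod int p))})"
proof -
  note p = assms(1)
  define Q where "Q = (\<lambda>d. p ^ d) ` set ds"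
  define k where "k = length ds"
  have p2: "p \<ge> 2" using p by (simp add: prime_ge_2_nat)
  have dist: "distinct ds" using assms(2) by (simp add: strict_sorted_iff)
  have inj: "inj_on (\<lambda>d. p ^ d) (set ds)"
  proof (rule inj_onI)
    fix x y assume "p ^ x = p ^ y"
    then show "x = y" using p2 by simp
  qed
  have cQ: "card Q = k" unfolding Q_def k_def using card_image[OF inj] distinct_card[OF dist] by simp
  have nQ: "n = \<Sum>Q"
  proof -
    have "n = sum (\<lambda>d. p ^ d) (set ds)" using assms(4) sum_list_distinct_conv_sum_set[OF dist] by simp
    also have "\<dots> = \<Sum>Q" unfolding Q_def using sum.reindex[OF inj, of "\<lambda>x. x"] by simp
    finally show ?thesis .
  qed
  have pwQ: "pw p Q" unfolding pw_def Q_def by auto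
  have finQ: "finite Q" unfolding Q_def by simp
  have k2: "k \<ge> 2" using assms(3) k_def by simp
  have Qne: "Q \<noteq> {}" using cQ k2 by auto
  have n0: "0 < n"
  proof -
    obtain x where x: "x \<in> Q" using Qne by blast
    have "x \<le> \<Sum>Q" using finQ x by (simp add: sum.remove)
    moreover have "x > 0" using pw_pos[OF pwQ _ x] p2 by simp
    ultimately show ?thesis using nQ by simp
  qed
  define P where "P = Pset Q"
  define F where "F = {1..<n} - P"
  have PX: "P \<subseteq> {1..<n}" using Pset_range[OF p2 pwQ] nQ P_def by simp
  have fP: "finite P" using PX finite_subset by blast
  have fF: "finite F" unfolding F_def by simp
  have disj: "P \<inter> F = {}" unfolding F_def by blast
  have cP: "card P = 2 ^ k - 2" using Pset_card[OF p2 pwQ Qne] cQ P_def by simp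
  have cPle: "card P \<le> n - 1" using card_mono[OF _ PX] by simp
  have cF: "card F = (n - 1) - card P" unfolding F_def using card_Diff_subset[OF fP PX] by simp
  have k4: "2 ^ k \<ge> (4::nat)" using k2 by (metis power_increasing one_le_numeral power2_eq_square numeral_times_numeral(1) mult_2 power_one_right numeral_Bit0 semiring_norm(2) order_trans le_refl)
  let ?\<Phi> = "\<lambda>T c. [(-1) ^ c * chi Q T = int i] (mod int p)"
  have cs: "c_count p i n = (\<Sum>T\<in>Pow P. card {R. R \<subseteq> F \<and> ?\<Phi> T (card T + card R)})"
    using c_count_chi[OF p pwQ nQ n0, of i] split_count[OF fP fF disj, of ?\<Phi>]
    unfolding P_def F_def by simp
  have partA: "c_count p i n = 2 ^ (n + 1 - 2 ^ k) * card {T. T \<subseteq> P \<and> [chi Q T = int i] (mod int p)}"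
    if A: "p = 2 \<or> i = 0"
  proof -
    have inner: "card {R. R \<subseteq> F \<and> ?\<Phi> T (card T + card R)}
        = (if [chi Q T = int i] (mod int p) then 2 ^ card F else 0)" for T
    proof -
      have "{R. R \<subseteq> F \<and> ?\<Phi> T (card T + card R)} = {R. R \<subseteq> F \<and> [chi Q T = int i] (mod int p)}"
        using signA[OF A] by simp
      moreover have "{R. R \<subseteq> F} = Pow F" by auto
      ultimately show ?thesis using fF by (simp add: card_Pow)
    qed
    have "c_count p i n = 2 ^ card F * card {T \<in> Pow P. [chi Q T = int i] (mod int p)}"
      unfolding cs inner by (rule sum_if_const) (use fP in simp)
    moreover have "{T \<in> Pow P. [chi Q T = int i] (mod int p)} = {T. T \<subseteq> P \<and> [chi Q T = int i] (mod int p)}"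
      by auto
    moreover have "card F = n + 1 - 2 ^ k" using cF cP cPle n0 k4 by linarith
    ultimately show ?thesis by simp
  qed
  have partB: "c_count p i n = 2 ^ (n - 2 ^ k) * card {T. T \<subseteq> P \<and>
      ([chi Q T = int i] (mod int p) \<or> [chi Q T = - int i] (mod int p))}"
    if B: "p > 2" "i \<in> {1..p-1}"
  proof -
    have i1: "1 \<le> i" "i < p" using B(2) assms(5) by auto
    have Fne: "F \<noteq> {}" using F_nonempty[of p Q] B(1) pwQ cQ k2 nQ unfolding F_def P_def by simp
    have inner: "card {R. R \<subseteq> F \<and> ?\<Phi> T (card T + card R)}
        = (if [chi Q T = int i] (mod int p) \<or> [chi Q T = - int i] (mod int p) then 2 ^ (card F - 1) else 0)" for T
    proof -
      have ex: "\<not> ([chi Q T = int i] (mod int p) \<and> [chi Q T = - int i] (mod int p))"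
        using exclusive[OF p B(1) i1] .
      show ?thesis
      proof (cases "[chi Q T = int i] (mod int p)")
        case True
        then have "{R. R \<subseteq> F \<and> ?\<Phi> T (card T + card R)} = {R. R \<subseteq> F \<and> even (card T + card R)}"
          using ex signB by auto
        then show ?thesis using True half_count(1)[OF fF Fne] by simp
      next
        case F1: False
        show ?thesis
        proof (cases "[chi Q T = - int i] (mod int p)")
          case True
          then have "{R. R \<subseteq> F \<and> ?\<Phi> T (card T + card R)} = {R. R \<subseteq> F \<and> odd (card T + card R)}"
            using F1 signB by auto
          then show ?thesis using True half_count(2)[OF fF Fne] by simp
        next
          case False
          have E: "{R. R \<subseteq> F \<and> ?\<Phi> T (card T + card R)} = {}"
            using False F1 signB by auto
          show ?thesis unfolding E using False F1 by simp
        qed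
      qed
    qed
    have "c_count p i n = 2 ^ (card F - 1) * card {T \<in> Pow P. [chi Q T = int i] (mod int p) \<or> [chi Q T = - int i] (mod int p)}"
      unfolding cs inner by (rule sum_if_const) (use fP in simp)
    moreover have "{T \<in> Pow P. [chi Q T = int i] (mod int p) \<or> [chi Q T = - int i] (mod int p)}
        = {T. T \<subseteq> P \<and> ([chi Q T = int i] (mod int p) \<or> [chi Q T = - int i] (mod int p))}"
      by auto
    moreover have "card F \<ge> 1" using Fne fF by (simp add: Suc_le_eq card_gt_0_iff)
    moreover have "card F - 1 = n - 2 ^ k" using cF cP cPle n0 k4 \<open>card F \<ge> 1\<close> by linarith
    ultimately show ?thesis by simp
  qed
  show ?thesis using partA partB unfolding P_def Q_def k_def by blast
qed


end
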